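(* Let $X$ be a finite simplicial complex and $d\ge0$. There is a one-to-one correspondence between the equivalence classes of $\sim^{\uparrow}_{d+1}$ and the distinct maps of the form $B_{d+1}FB_{d+1}^\intercal$ (with $F$ a smooth map $C_{d+1}(X)\to C_{d+1}(X)$), realized by $[F]\mapsto B_{d+1}FB_{d+1}^\intercal$. Similarly, there is a one-to-one correspondence between the equivalence classes of $\sim^{\downarrow}_{d-1}$ and the distinct maps of the form $B_d^\intercal HB_d$ (with $H$ a smooth map $C_{d-1}(X)\to C_{d-1}(X)$), realized by $[H]\mapsto B_d^\intercal HB_d$.
   Context: A finite simplicial complex $X$ on vertex set $\{1,\dots,n\}$ is a collection of nonempty subsets closed under taking nonempty subsets; $X_d$ is the set of simplices with $d+1$ vertices; a $d$-simplex with vertices $i_0<\dots<i_d$ is written $[i_0,\dots,i_d]$. $C_d(X)$ is the real vector space with basis $X_d$ and inner product making $X_d$ orthonormal ($C_{-1}(X)=0$). The boundary map is $\partial_d[i_0,\dots,i_d]=\sum_{k=0}^d(-1)^k[i_0,\dots,\widehat{i_k},\dots,i_d]$ with matrix $B_d$; $B_d^\intercal$ its transpose. $P_{d+1}$ is the orthogonal projection of $C_{d+1}(X)$ onto $\operatorname{im}(B_{d+1}^\intercal)$ and $Q_{d-1}$ is the orthogonal projection of $C_{d-1}(X)$ onto $\operatorname{im}(B_d)$. On smooth maps $C_{d+1}(X)\to C_{d+1}(X)$ the equivalence relation $\sim^{\uparrow}_{d+1}$ is $\mathcal A\sim^{\uparrow}_{d+1}\mathcal B\iff P_{d+1}\mathcal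 AP_{d+1}=P_{d+1}\mathcal BP_{d+1}$; on smooth maps $C_{d-1}(X)\to C_{d-1}(X)$ the relation $\sim^{\downarrow}_{d-1}$ is $\mathcal A\sim^{\downarrow}_{d-1}\mathcal B\iff Q_{d-1}\mathcal AQ_{d-1}=Q_{d-1}\mathcal BQ_{d-1}$. *)

theory Defs
  imports "HOL-Analysis.Analysis"
begin

text \<open>Simplices are vertex sets (nat set); a vset with vertices i_0<...<i_d is oriented
by this increasing order. Chains of degree k are functions (nat set => real) supported on X_k.\<close>

type_synonym vset = "nat set"
type_synonym chain = "vset \<Rightarrow> real"

definition simplicial_complex :: "nat \<Rightarrow> vset set \<Rightarrow> bool" where
  "simplicial_complex n X \<longleftrightarrow>
     X \<subseteq> {\<sigma>. \<sigma> \<noteq> {} \<and> \<sigma> \<subseteq> {1..n}} \<and>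
     (\<forall>\<sigma>\<in>X. \<forall>\<tau>. \<tau> \<noteq> {} \<and> \<tau> \<subseteq> \<sigma> \<longrightarrow> \<tau> \<in> X)"

text \<open>X_k: simplices with k+1 vertices (k an integer, so X_{-1} is empty).\<close>
definition simplices :: "vset set \<Rightarrow> int \<Rightarrow> vset set" where
  "simplices X k = {\<sigma>\<in>X. int (card \<sigma>) = k + 1}"

definition chainsp :: "vset set \<Rightarrow> chain set" where
  "chainsp I = {c. \<forall>\<sigma>. \<sigma> \<notin> I \<longrightarrow> c \<sigma> = 0}"

text \<open>C_k(X), realised as chains supported on X_k (so C_{-1} = {0}).\<close>
definition chains :: "vset set \<Rightarrow> int \<Rightarrow> chain set" where
  "chains X k = chainsp (simplices X k)"

text \<open>Coefficient of tau in the boundary of sigma: (-1)^j if tau is sigma with its j-th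
(0-based, increasing order) vertex removed, 0 otherwise.\<close>
definition bd_coeff :: "vset \<Rightarrow> vset \<Rightarrow> real" where
  "bd_coeff \<sigma> \<tau> =
     (if \<tau> \<subseteq> \<sigma> \<and> card (\<sigma> - \<tau>) = 1
      then (-1) ^ card {u\<in>\<sigma>. u < the_elem (\<sigma> - \<tau>)} else 0)"

definition bd :: "vset set \<Rightarrow> int \<Rightarrow> chain \<Rightarrow> chain" where
  "bd X k c = (\<lambda>\<tau>. if \<tau> \<in> simplices X (k - 1)
                    then (\<Sum>\<sigma>\<in>simplices X k. bd_coeff \<sigma> \<tau> * c \<sigma>) else 0)"

definition bdT :: "vset set \<Rightarrow> int \<Rightarrow> chain \<Rightarrow> chain" where
  "bdT X k c = (\<lambda>\<sigma>. if \<sigma> \<in> simplices X k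
                    then (\<Sum>\<tau>\<in>simplices X (k - 1). bd_coeff \<sigma> \<tau> * c \<tau>) else 0)"

definition chain_inner :: "vset set \<Rightarrow> int \<Rightarrow> chain \<Rightarrow> chain \<Rightarrow> real" where
  "chain_inner X k a b = (\<Sum>\<sigma>\<in>simplices X k. a \<sigma> * b \<sigma>)"

definition orth_proj :: "vset set \<Rightarrow> int \<Rightarrow> chain set \<Rightarrow> chain \<Rightarrow> chain" where
  "orth_proj X k V c =
     (THE p. p \<in> V \<and> (\<forall>v\<in>V. chain_inner X k (\<lambda>\<sigma>. c \<sigma> - p \<sigma>) v = 0))"

definition projP :: "vset set \<Rightarrow> int \<Rightarrow> chain \<Rightarrow> chain" where
  "projP X k = orth_proj X k (bdT X k ` chains X (k - 1))"

definition projQ :: "vset set \<Rightarrow> int \<Rightarrow> chain \<Rightarrow> chain" where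
  "projQ X k = orth_proj X k (bd X (k + 1) ` chains X (k + 1))"

text \<open>Smoothness on the finite-dimensional space of chains supported on I (coordinates indexed
by I): all iterated partial derivatives exist and are continuous.\<close>
definition pderiv_chain :: "vset \<Rightarrow> (chain \<Rightarrow> real) \<Rightarrow> chain \<Rightarrow> real" where
  "pderiv_chain \<sigma> g c = deriv (\<lambda>t. g (c(\<sigma> := c \<sigma> + t))) 0"

definition smooth_fun :: "vset set \<Rightarrow> (chain \<Rightarrow> real) \<Rightarrow> bool" where
  "smooth_fun I g \<longleftrightarrow>
     (\<forall>s. set s \<subseteq> I \<longrightarrow>
        continuous_on (chainsp I) (foldr pderiv_chain s g) \<and>
        (\<forall>\<sigma>\<in>I. \<forall>c\<in>chainsp I.
            (\<lambda>t. foldr pderiv_chain s g (c(\<sigma> := c \<sigma> + t))) differentiable (at 0)))"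

text \<open>Smooth maps C_k -> C_k; maps are represented extensionally (value 0 off C_k),
so that HOL equality of representatives is equality of maps on C_k.\<close>
definition restr :: "chain set \<Rightarrow> (chain \<Rightarrow> chain) \<Rightarrow> chain \<Rightarrow> chain" where
  "restr C f = (\<lambda>c. if c \<in> C then f c else (\<lambda>_. 0))"

definition smooth_maps :: "vset set \<Rightarrow> int \<Rightarrow> (chain \<Rightarrow> chain) set" where
  "smooth_maps X k =
     {F. F ` chains X k \<subseteq> chains X k \<and> restr (chains X k) F = F \<and>
         (\<forall>\<tau>\<in>simplices X k. smooth_fun (simplices X k) (\<lambda>c. F c \<tau>))}"

definition rel_up :: "vset set \<Rightarrow> int \<Rightarrow> ((chain \<Rightarrow> chain) \<times> (chain \<Rightarrow> chain)) set" where
  "rel_up X k = {(A, B). A \<in> smooth_maps X k \<and> B \<in> smooth_maps X k \<and>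
     restr (chains X k) (projP X k \<circ> A \<circ> projP X k) =
     restr (chains X k) (projP X k \<circ> B \<circ> projP X k)}"

definition rel_down :: "vset set \<Rightarrow> int \<Rightarrow> ((chain \<Rightarrow> chain) \<times> (chain \<Rightarrow> chain)) set" where
  "rel_down X k = {(A, B). A \<in> smooth_maps X k \<and> B \<in> smooth_maps X k \<and>
     restr (chains X k) (projQ X k \<circ> A \<circ> projQ X k) =
     restr (chains X k) (projQ X k \<circ> B \<circ> projQ X k)}"

definition up_sandwich :: "vset set \<Rightarrow> int \<Rightarrow> (chain \<Rightarrow> chain) \<Rightarrow> chain \<Rightarrow> chain" where
  "up_sandwich X d F = restr (chains X d) (bd X (d + 1) \<circ> F \<circ> bdT X (d + 1))"

definition down_sandwich :: "vset set \<Rightarrow> int \<Rightarrow> (chain \<Rightarrow> chain) \<Rightarrow> chain \<Rightarrow> chain" where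
  "down_sandwich X d H = restr (chains X d) (bdT X d \<circ> H \<circ> bd X d)"

end

theory Submission
  imports Defs
begin

definition ipS :: "vset set \<Rightarrow> chain \<Rightarrow> chain \<Rightarrow> real" where
  "ipS S a b = (\<Sum>\<sigma>\<in>S. a \<sigma> * b \<sigma>)"

lemma ipS_diff_left: "ipS S (\<lambda>\<sigma>. a \<sigma> - b \<sigma>) c = ipS S a c - ipS S b c"
  by (simp add: ipS_def left_diff_distrib sum_subtractf)
lemma ipS_diff_right: "ipS S c (\<lambda>\<sigma>. a \<sigma> - b \<sigma>) = ipS S c a - ipS S c b"
  by (simp add: ipS_def right_diff_distrib sum_subtractf)
lemma ipS_add_right: "ipS S c (\<lambda>\<sigma>. a \<sigma> + b \<sigma>) = ipS S c a + ipS S c b"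
  by (simp add: ipS_def distrib_left sum.distrib)
lemma ipS_scale_left: "ipS S (\<lambda>\<sigma>. x * a \<sigma>) c = x * ipS S a c"
  by (simp add: ipS_def sum_distrib_left mult.assoc)
lemma ipS_scale_right: "ipS S c (\<lambda>\<sigma>. x * a \<sigma>) = x * ipS S c a"
  by (simp add: ipS_def sum_distrib_left mult.assoc mult.left_commute)
lemma ipS_sum_right: "ipS S c (\<lambda>\<sigma>. \<Sum>i\<in>J. f i \<sigma>) = (\<Sum>i\<in>J. ipS S c (f i))"
  unfolding ipS_def sum_distrib_left by (rule sum.swap)
lemma ipS_comm: "ipS S a b = ipS S b a"
  by (simp add: ipS_def mult.commute)

lemma ipS_self_zero:
  assumes "finite S" "ipS S r r = 0"
  shows "\<forall>\<sigma>\<in>S. r \<sigma> = 0"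
proof -
  have "\<forall>\<sigma>\<in>S. r \<sigma> * r \<sigma> = 0"
    using assms sum_nonneg_eq_0_iff[of S "\<lambda>\<sigma>. r \<sigma> * r \<sigma>"] by (simp add: ipS_def)
  then show ?thesis by simp
qed

lemma ipS_zero_right: assumes "\<forall>\<sigma>\<in>S. r \<sigma> = 0" shows "ipS S w r = 0"
  using assms by (simp add: ipS_def)

lemma lc_orth:
  assumes "\<forall>i\<in>J. ipS S w (g i) = 0"
  shows "ipS S w (\<lambda>\<sigma>. \<Sum>k\<in>J. b k * g k \<sigma>) = 0"
  using assms by (simp add: ipS_sum_right ipS_scale_right)

lemma gs_exists:
  assumes "finite J" "finite S"
  shows "\<forall>y. \<exists>a. \<forall>i\<in>J. ipS S (\<lambda>\<sigma>. y \<sigma> - (\<Sum>k\<in>J. a k * g k \<sigma>)) (g i) = 0"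
  using assms(1)
proof (induction J rule: finite_induct)
  case empty then show ?case by simp
next
  case (insert j J)
  show ?case
  proof
    fix y :: chain
    obtain ay where ay: "\<forall>i\<in>J. ipS S (\<lambda>\<sigma>. y \<sigma> - (\<Sum>k\<in>J. ay k * g k \<sigma>)) (g i) = 0"
      using insert.IH by blast
    obtain as where as: "\<forall>i\<in>J. ipS S (\<lambda>\<sigma>. g j \<sigma> - (\<Sum>k\<in>J. as k * g k \<sigma>)) (g i) = 0"
      using insert.IH by blast
    define py where "py = (\<lambda>\<sigma>. \<Sum>k\<in>J. ay k * g k \<sigma>)"
    define ps where "ps = (\<lambda>\<sigma>. \<Sum>k\<in>J. as k * g k \<sigma>)"
    define r where "r = (\<lambda>\<sigma>. g j \<sigma> - ps \<sigma>)"
    define e where "e = (\<lambda>\<sigma>. y \<sigma> - py \<sigma>)"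
    have eJ: "\<forall>i\<in>J. ipS S e (g i) = 0" using ay by (simp add: e_def py_def)
    have rJ: "\<forall>i\<in>J. ipS S r (g i) = 0" using as by (simp add: r_def ps_def)
    have e_ps: "ipS S e ps = 0" unfolding ps_def by (rule lc_orth[OF eJ])
    have r_ps: "ipS S r ps = 0" unfolding ps_def by (rule lc_orth[OF rJ])
    have gj: "g j = (\<lambda>\<sigma>. r \<sigma> + ps \<sigma>)" by (simp add: r_def)
    show "\<exists>a. \<forall>i\<in>insert j J. ipS S (\<lambda>\<sigma>. y \<sigma> - (\<Sum>k\<in>insert j J. a k * g k \<sigma>)) (g i) = 0"
    proof (cases "ipS S r r = 0")
      case True
      have r0: "ipS S w r = 0" for w
        using ipS_self_zero[OF assms(2) True] by (rule ipS_zero_right)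
      have lc: "(\<Sum>k\<in>insert j J. (ay(j:=0)) k * g k \<sigma>) = py \<sigma>" for \<sigma>
      proof -
        have "(\<Sum>k\<in>insert j J. (ay(j:=0)) k * g k \<sigma>) = (\<Sum>k\<in>J. (ay(j:=0)) k * g k \<sigma>)"
          using insert.hyps by simp
        also have "\<dots> = py \<sigma>" unfolding py_def
          using insert.hyps by (intro sum.cong) auto
        finally show ?thesis .
      qed
      have "\<forall>i\<in>insert j J. ipS S e (g i) = 0"
        using eJ by (simp add: gj ipS_add_right r0 e_ps)
      moreover have "(\<lambda>\<sigma>. y \<sigma> - (\<Sum>k\<in>insert j J. (ay(j:=0)) k * g k \<sigma>)) = e"
        by (simp only: lc e_def)
      ultimately show ?thesis by (intro exI[of _ "ay(j:=0)"]) simp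
    next
      case False
      define \<alpha> where "\<alpha> = ipS S e r / ipS S r r"
      define a where "a = (\<lambda>i. if i = j then \<alpha> else ay i - \<alpha> * as i)"
      have lc: "(\<Sum>k\<in>insert j J. a k * g k \<sigma>) = py \<sigma> + \<alpha> * r \<sigma>" for \<sigma>
      proof -
        have "(\<Sum>k\<in>insert j J. a k * g k \<sigma>) = \<alpha> * g j \<sigma> + (\<Sum>k\<in>J. a k * g k \<sigma>)"
          using insert.hyps by (simp add: a_def)
        also have "(\<Sum>k\<in>J. a k * g k \<sigma>) = (\<Sum>k\<in>J. ay k * g k \<sigma> - \<alpha> * (as k * g k \<sigma>))"
          using insert.hyps by (intro sum.cong) (auto simp: a_def algebra_simps)
        also have "\<dots> = py \<sigma> - \<alpha> * ps \<sigma>"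
          by (simp add: py_def ps_def sum_subtractf sum_distrib_left)
        finally show ?thesis by (simp add: r_def algebra_simps)
      qed
      define e' where "e' = (\<lambda>\<sigma>. e \<sigma> - \<alpha> * r \<sigma>)"
      have e'J: "\<forall>i\<in>J. ipS S e' (g i) = 0"
        using eJ rJ by (simp add: e'_def ipS_diff_left ipS_scale_left)
      have e'r: "ipS S e' r = 0"
        using False unfolding e'_def ipS_diff_left ipS_scale_left \<alpha>_def by simp
      have e'ps: "ipS S e' ps = 0"
        using e_ps r_ps by (simp add: e'_def ipS_diff_left ipS_scale_left)
      have "\<forall>i\<in>insert j J. ipS S e' (g i) = 0"
        using e'J by (simp add: gj ipS_add_right e'r e'ps)
      moreover have "(\<lambda>\<sigma>. y \<sigma> - (\<Sum>k\<in>insert j J. a k * g k \<sigma>)) = e'"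
        by (simp add: lc e'_def e_def algebra_simps)
      ultimately show ?thesis by (intro exI[of _ a]) simp
    qed
  qed
qed

definition mapL :: "vset set \<Rightarrow> vset set \<Rightarrow> (vset \<Rightarrow> vset \<Rightarrow> real) \<Rightarrow> chain \<Rightarrow> chain" where
  "mapL S T m c = (\<lambda>\<sigma>. if \<sigma> \<in> S then (\<Sum>\<tau>\<in>T. m \<sigma> \<tau> * c \<tau>) else 0)"
definition mapM :: "vset set \<Rightarrow> vset set \<Rightarrow> (vset \<Rightarrow> vset \<Rightarrow> real) \<Rightarrow> chain \<Rightarrow> chain" where
  "mapM S T m w = (\<lambda>\<tau>. if \<tau> \<in> T then (\<Sum>\<sigma>\<in>S. m \<sigma> \<tau> * w \<sigma>) else 0)"
definition prj :: "vset set \<Rightarrow> vset set \<Rightarrow> (vset \<Rightarrow> vset \<Rightarrow> real) \<Rightarrow> chain \<Rightarrow> chain" where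
  "prj S T m y = (THE p. p \<in> mapL S T m ` chainsp T \<and>
      (\<forall>v\<in>mapL S T m ` chainsp T. ipS S (\<lambda>\<sigma>. y \<sigma> - p \<sigma>) v = 0))"

lemma adjoint: "ipS S w (mapL S T m c) = ipS T (mapM S T m w) c"
proof -
  have "ipS S w (mapL S T m c) = (\<Sum>\<sigma>\<in>S. \<Sum>\<tau>\<in>T. w \<sigma> * (m \<sigma> \<tau> * c \<tau>))"
    by (simp add: ipS_def mapL_def sum_distrib_left)
  also have "\<dots> = (\<Sum>\<tau>\<in>T. \<Sum>\<sigma>\<in>S. w \<sigma> * (m \<sigma> \<tau> * c \<tau>))" by (rule sum.swap)
  also have "\<dots> = ipS T (mapM S T m w) c"
    unfolding ipS_def mapM_def by (auto simp: sum_distrib_left sum_distrib_right mult_ac intro!: sum.cong)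
  finally show ?thesis .
qed

lemma mapL_in: "mapL S T m c \<in> chainsp S" by (simp add: mapL_def chainsp_def)
lemma mapM_in: "mapM S T m c \<in> chainsp T" by (simp add: mapM_def chainsp_def)

lemma mapL_diff: "mapL S T m (\<lambda>\<tau>. c \<tau> - c' \<tau>) = (\<lambda>\<sigma>. mapL S T m c \<sigma> - mapL S T m c' \<sigma>)"
  by (auto simp: mapL_def sum_subtractf right_diff_distrib)
lemma mapM_diff: "mapM S T m (\<lambda>\<tau>. c \<tau> - c' \<tau>) = (\<lambda>\<sigma>. mapM S T m c \<sigma> - mapM S T m c' \<sigma>)"
  by (auto simp: mapM_def sum_subtractf right_diff_distrib)

lemma mapL_lc: "mapL S T m c = (\<lambda>\<sigma>. \<Sum>\<tau>\<in>T. c \<tau> * (\<lambda>\<sigma>. if \<sigma> \<in> S then m \<sigma> \<tau> else 0) \<sigma>)"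
  by (auto simp: mapL_def mult.commute)

lemma proj_ex:
  assumes "finite S" "finite T"
  shows "\<exists>p. p \<in> mapL S T m ` chainsp T \<and>
      (\<forall>v\<in>mapL S T m ` chainsp T. ipS S (\<lambda>\<sigma>. y \<sigma> - p \<sigma>) v = 0)"
proof -
  define g where "g = (\<lambda>\<tau> \<sigma>. if \<sigma> \<in> S then m \<sigma> \<tau> else (0::real))"
  obtain a where a: "\<forall>i\<in>T. ipS S (\<lambda>\<sigma>. y \<sigma> - (\<Sum>k\<in>T. a k * g k \<sigma>)) (g i) = 0"
    using gs_exists[OF assms(2,1), of g] by blast
  define c where "c = (\<lambda>\<tau>. if \<tau> \<in> T then a \<tau> else 0)"
  have c: "c \<in> chainsp T" by (simp add: c_def chainsp_def)
  have Lg: "mapL S T m c' = (\<lambda>\<sigma>. \<Sum>k\<in>T. c' k * g k \<sigma>)" for c'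
    by (auto simp: mapL_def g_def mult.commute)
  have p: "mapL S T m c = (\<lambda>\<sigma>. \<Sum>k\<in>T. a k * g k \<sigma>)"
    unfolding Lg by (auto simp: c_def intro!: sum.cong)
  show ?thesis
  proof (intro exI conjI ballI)
    show "mapL S T m c \<in> mapL S T m ` chainsp T" using c by blast
  next
    fix v assume "v \<in> mapL S T m ` chainsp T"
    then obtain c' where v: "v = mapL S T m c'" by blast
    show "ipS S (\<lambda>\<sigma>. y \<sigma> - mapL S T m c \<sigma>) v = 0"
      unfolding v p Lg[of c']
      using lc_orth[OF a, of c'] by (simp add: mult.commute)
  qed
qed

lemma proj_uniq:
  assumes "finite S"
    and "p \<in> mapL S T m ` chainsp T" "\<forall>v\<in>mapL S T m ` chainsp T. ipS S (\<lambda>\<sigma>. y \<sigma> - p \<sigma>) v = 0"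
    and "p' \<in> mapL S T m ` chainsp T" "\<forall>v\<in>mapL S T m ` chainsp T. ipS S (\<lambda>\<sigma>. y \<sigma> - p' \<sigma>) v = 0"
  shows "p = p'"
proof -
  obtain c where c: "c \<in> chainsp T" "p = mapL S T m c" using assms(2) by blast
  obtain c' where c': "c' \<in> chainsp T" "p' = mapL S T m c'" using assms(4) by blast
  define d where "d = (\<lambda>\<sigma>. p \<sigma> - p' \<sigma>)"
  have "d = mapL S T m (\<lambda>\<tau>. c \<tau> - c' \<tau>)" by (simp add: d_def c c' mapL_diff)
  moreover have "(\<lambda>\<tau>. c \<tau> - c' \<tau>) \<in> chainsp T" using c c' by (simp add: chainsp_def)
  ultimately have dV: "d \<in> mapL S T m ` chainsp T" by blast
  have "ipS S d d = ipS S (\<lambda>\<sigma>. y \<sigma> - p' \<sigma>) d - ipS S (\<lambda>\<sigma>. y \<sigma> - p \<sigma>) d"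
    unfolding ipS_def sum_subtractf[symmetric] by (rule sum.cong) (auto simp: d_def algebra_simps)
  also have "\<dots> = 0"
  proof -
    have "ipS S (\<lambda>\<sigma>. y \<sigma> - p' \<sigma>) d = 0" using assms(5) dV by blast
    moreover have "ipS S (\<lambda>\<sigma>. y \<sigma> - p \<sigma>) d = 0" using assms(3) dV by blast
    ultimately show ?thesis by simp
  qed
  finally have "\<forall>\<sigma>\<in>S. d \<sigma> = 0" using ipS_self_zero[OF assms(1)] by blast
  moreover have "\<forall>\<sigma>. \<sigma> \<notin> S \<longrightarrow> p \<sigma> = 0 \<and> p' \<sigma> = 0" using c c' by (simp add: mapL_def)
  ultimately show ?thesis by (intro ext) (metis d_def eq_iff_diff_eq_0)
qed

lemma prj_char:
  assumes "finite S" "finite T"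
  shows "prj S T m y \<in> mapL S T m ` chainsp T \<and>
      (\<forall>v\<in>mapL S T m ` chainsp T. ipS S (\<lambda>\<sigma>. y \<sigma> - prj S T m y \<sigma>) v = 0)"
proof -
  obtain p where p: "p \<in> mapL S T m ` chainsp T"
      "\<forall>v\<in>mapL S T m ` chainsp T. ipS S (\<lambda>\<sigma>. y \<sigma> - p \<sigma>) v = 0"
    using proj_ex[OF assms, of m y] by (elim exE conjE)
  have "\<exists>!p. p \<in> mapL S T m ` chainsp T \<and>
      (\<forall>v\<in>mapL S T m ` chainsp T. ipS S (\<lambda>\<sigma>. y \<sigma> - p \<sigma>) v = 0)"
  proof (rule ex1I)
    show "p \<in> mapL S T m ` chainsp T \<and>
      (\<forall>v\<in>mapL S T m ` chainsp T. ipS S (\<lambda>\<sigma>. y \<sigma> - p \<sigma>) v = 0)" using p by (rule conjI)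
  next
    fix q assume q: "q \<in> mapL S T m ` chainsp T \<and>
      (\<forall>v\<in>mapL S T m ` chainsp T. ipS S (\<lambda>\<sigma>. y \<sigma> - q \<sigma>) v = 0)"
    show "q = p" using proj_uniq[OF assms(1) conjunct1[OF q] conjunct2[OF q] p] .
  qed
  then show ?thesis unfolding prj_def by (rule theI')
qed

lemma prj_eqI:
  assumes "finite S" "finite T" "p \<in> mapL S T m ` chainsp T"
    "\<forall>v\<in>mapL S T m ` chainsp T. ipS S (\<lambda>\<sigma>. y \<sigma> - p \<sigma>) v = 0"
  shows "prj S T m y = p"
  using proj_uniq[OF assms(1) conjunct1[OF prj_char[OF assms(1,2)]] conjunct2[OF prj_char[OF assms(1,2)]] assms(3,4)] .

lemma prj_id:
  assumes "finite S" "finite T" "v \<in> mapL S T m ` chainsp T"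
  shows "prj S T m v = v"
proof (rule prj_eqI[OF assms])
  show "\<forall>w\<in>mapL S T m ` chainsp T. ipS S (\<lambda>\<sigma>. v \<sigma> - v \<sigma>) w = 0"
    by (simp add: ipS_def)
qed

lemma mapM_prj:
  assumes "finite S" "finite T"
  shows "mapM S T m (prj S T m y) = mapM S T m y"
proof -
  define w where "w = (\<lambda>\<sigma>. y \<sigma> - prj S T m y \<sigma>)"
  have "mapM S T m w \<in> chainsp T" by (rule mapM_in)
  then have "mapL S T m (mapM S T m w) \<in> mapL S T m ` chainsp T" by (rule imageI)
  then have "ipS S w (mapL S T m (mapM S T m w)) = 0"
    using conjunct2[OF prj_char[OF assms, of m y]] unfolding w_def by (rule bspec[rotated])
  then have "ipS T (mapM S T m w) (mapM S T m w) = 0" by (simp only: adjoint)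
  then have z: "\<forall>\<tau>\<in>T. mapM S T m w \<tau> = 0" by (rule ipS_self_zero[OF assms(2)])
  have "mapM S T m y \<tau> - mapM S T m (prj S T m y) \<tau> = 0" for \<tau>
  proof (cases "\<tau> \<in> T")
    case True
    then have "mapM S T m w \<tau> = 0" using z by blast
    then show ?thesis unfolding w_def mapM_diff .
  next
    case False
    then show ?thesis by (simp add: mapM_def)
  qed
  then show ?thesis by (simp add: fun_eq_iff)
qed

lemma prj_cong:
  assumes "finite S" "finite T" "mapM S T m y = mapM S T m z"
  shows "prj S T m y = prj S T m z"
proof (rule prj_eqI[OF assms(1,2)])
  show "prj S T m z \<in> mapL S T m ` chainsp T" using prj_char[OF assms(1,2)] by blast
  show "\<forall>v\<in>mapL S T m ` chainsp T. ipS S (\<lambda>\<sigma>. y \<sigma> - prj S T m z \<sigma>) v = 0"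
  proof
    fix v assume v: "v \<in> mapL S T m ` chainsp T"
    then obtain c where c: "v = mapL S T m c" by blast
    have "ipS S (\<lambda>\<sigma>. y \<sigma> - prj S T m z \<sigma>) v
        = ipS S (\<lambda>\<sigma>. y \<sigma> - z \<sigma>) v + ipS S (\<lambda>\<sigma>. z \<sigma> - prj S T m z \<sigma>) v"
      unfolding ipS_def sum.distrib[symmetric] by (rule sum.cong) (auto simp: algebra_simps)
    also have "ipS S (\<lambda>\<sigma>. z \<sigma> - prj S T m z \<sigma>) v = 0" using prj_char[OF assms(1,2)] v by blast
    also have "ipS S (\<lambda>\<sigma>. y \<sigma> - z \<sigma>) v = 0"
      unfolding c adjoint mapM_diff assms(3) by (simp add: ipS_def)
    finally show "ipS S (\<lambda>\<sigma>. y \<sigma> - prj S T m z \<sigma>) v = 0" by simp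
  qed
qed

lemma kernel_bij:
  "bij_betw (\<lambda>K. the_elem (f ` K)) (A // {(a,b). a\<in>A \<and> b\<in>A \<and> f a = f b}) (f ` A)"
proof -
  let ?R = "{(a,b). a\<in>A \<and> b\<in>A \<and> f a = f b}"
  have cls: "K \<in> A // ?R \<longleftrightarrow> (\<exists>a\<in>A. K = {b\<in>A. f a = f b})" for K
    unfolding quotient_def by auto
  have img: "a \<in> A \<Longrightarrow> the_elem (f ` {b\<in>A. f a = f b}) = f a" for a
  proof -
    assume "a \<in> A"
    then have "f ` {b\<in>A. f a = f b} = {f a}" by auto
    then show ?thesis by simp
  qed
  show ?thesis
    unfolding bij_betw_def inj_on_def
  proof (intro conjI ballI impI)
    fix K1 K2 assume "K1 \<in> A // ?R" "K2 \<in> A // ?R" "the_elem (f ` K1) = the_elem (f ` K2)"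
    then show "K1 = K2" unfolding cls using img by auto
  next
    show "(\<lambda>K. the_elem (f ` K)) ` (A // ?R) = f ` A"
    proof
      show "(\<lambda>K. the_elem (f ` K)) ` (A // ?R) \<subseteq> f ` A"
      proof
        fix x assume "x \<in> (\<lambda>K. the_elem (f ` K)) ` (A // ?R)"
        then obtain K where K: "K \<in> A // ?R" "x = the_elem (f ` K)" by blast
        then obtain a where a: "a \<in> A" "K = {b\<in>A. f a = f b}" using cls by blast
        then show "x \<in> f ` A" using K img by auto
      qed
      show "f ` A \<subseteq> (\<lambda>K. the_elem (f ` K)) ` (A // ?R)"
      proof
        fix x assume "x \<in> f ` A"
        then obtain a where a: "a \<in> A" "x = f a" by blast
        then have "{b\<in>A. f a = f b} \<in> A // ?R" unfolding cls by blast
        then show "x \<in> (\<lambda>K. the_elem (f ` K)) ` (A // ?R)" using img[OF a(1)] a by force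
      qed
    qed
  qed
qed

lemma restr_eq_iff: "restr C f = restr C g \<longleftrightarrow> (\<forall>x\<in>C. f x = g x)"
  unfolding restr_def by (auto simp: fun_eq_iff)

lemma abstract_main:
  fixes Sm :: "(chain \<Rightarrow> chain) set" and sw :: "(chain \<Rightarrow> chain) \<Rightarrow> chain \<Rightarrow> chain"
  assumes fin: "finite S" "finite T"
    and sw: "\<And>F. sw F = restr (chainsp T) (mapM S T m \<circ> F \<circ> mapL S T m)"
    and R: "R = {(A,B). A \<in> Sm \<and> B \<in> Sm \<and> restr (chainsp S) (prj S T m \<circ> A \<circ> prj S T m)
                                   = restr (chainsp S) (prj S T m \<circ> B \<circ> prj S T m)}"
  shows "(\<forall>F\<in>Sm. \<forall>G\<in>Sm. (F,G) \<in> R \<longrightarrow> sw F = sw G)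
       \<and> bij_betw (\<lambda>K. the_elem (sw ` K)) (Sm // R) (sw ` Sm)"
proof -
  let ?P = "prj S T m" and ?L = "mapL S T m" and ?M = "mapM S T m"
  have key: "restr (chainsp S) (?P \<circ> F \<circ> ?P) = restr (chainsp S) (?P \<circ> G \<circ> ?P)
           \<longleftrightarrow> sw F = sw G" for F G
    unfolding sw restr_eq_iff
  proof (simp only: o_apply, intro iffI ballI)
    fix c assume H: "\<forall>x\<in>chainsp S. ?P (F (?P x)) = ?P (G (?P x))" and c: "c \<in> chainsp T"
    have Lc: "?P (?L c) = ?L c" using prj_id[OF fin] c by blast
    have "?M (F (?L c)) = ?M (?P (F (?P (?L c))))" using Lc mapM_prj[OF fin] by simp
    also have "\<dots> = ?M (?P (G (?P (?L c))))" using bspec[OF H mapL_in] by simp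
    also have "\<dots> = ?M (G (?L c))" using Lc mapM_prj[OF fin] by simp
    finally show "?M (F (?L c)) = ?M (G (?L c))" .
  next
    fix x assume H: "\<forall>c\<in>chainsp T. ?M (F (?L c)) = ?M (G (?L c))" and x: "x \<in> chainsp S"
    have "?P x \<in> ?L ` chainsp T" using prj_char[OF fin, of m x] by (rule conjunct1)
    then obtain c where c: "c \<in> chainsp T" "?P x = ?L c" by (rule imageE) simp
    have "?M (F (?L c)) = ?M (G (?L c))" using bspec[OF H c(1)] .
    then have "?P (F (?L c)) = ?P (G (?L c))" by (rule prj_cong[OF fin])
    then show "?P (F (?P x)) = ?P (G (?P x))" unfolding c(2) .
  qed
  have R': "R = {(a,b). a\<in>Sm \<and> b\<in>Sm \<and> sw a = sw b}" unfolding R by (simp only: key)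
  have c1: "\<forall>F\<in>Sm. \<forall>G\<in>Sm. (F,G) \<in> R \<longrightarrow> sw F = sw G"
  proof (intro ballI impI)
    fix F G assume "(F,G) \<in> R"
    then have "(F,G) \<in> {(a,b). a\<in>Sm \<and> b\<in>Sm \<and> sw a = sw b}" by (simp only: R')
    then show "sw F = sw G" by (rule CollectE) (simp only: prod.case)
  qed
  have c2: "bij_betw (\<lambda>K. the_elem (sw ` K)) (Sm // R) (sw ` Sm)"
    unfolding R' by (rule kernel_bij)
  from c1 c2 show ?thesis by (rule conjI)
qed

lemma fin_simplices:
  assumes "simplicial_complex n X"
  shows "finite (simplices X k)"
proof -
  have "simplices X k \<subseteq> Pow {1..n}" using assms
    unfolding simplicial_complex_def simplices_def by blast
  then show ?thesis by (rule finite_subset) simp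
qed

theorem mainTheorem8:
  fixes n d :: nat and X :: "nat set set"
  assumes "simplicial_complex n X"
  shows "(\<forall>F\<in>smooth_maps X (int d + 1). \<forall>G\<in>smooth_maps X (int d + 1).
            (F, G) \<in> rel_up X (int d + 1) \<longrightarrow> up_sandwich X (int d) F = up_sandwich X (int d) G)
       \<and> bij_betw (\<lambda>K. the_elem (up_sandwich X (int d) ` K))
           (smooth_maps X (int d + 1) // rel_up X (int d + 1))
           (up_sandwich X (int d) ` smooth_maps X (int d + 1))
       \<and> (\<forall>H\<in>smooth_maps X (int d - 1). \<forall>H'\<in>smooth_maps X (int d - 1).
            (H, H') \<in> rel_down X (int d - 1) \<longrightarrow> down_sandwich X (int d) H = down_sandwich X (int d) H')
       \<and> bij_betw (\<lambda>K. the_elem (down_sandwich X (int d) ` K))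
           (smooth_maps X (int d - 1) // rel_down X (int d - 1))
           (down_sandwich X (int d) ` smooth_maps X (int d - 1))"
proof -
  have fin: "finite (simplices X k)" for k using fin_simplices[OF assms] .
  let ?S = "simplices X (int d + 1)" and ?T = "simplices X (int d)"
  have bdT_eq: "bdT X (int d + 1) = mapL ?S ?T bd_coeff"
    by (simp add: fun_eq_iff bdT_def mapL_def)
  have bd_eq: "bd X (int d + 1) = mapM ?S ?T bd_coeff"
    by (simp add: fun_eq_iff bd_def mapM_def)
  have P_eq: "projP X (int d + 1) = prj ?S ?T bd_coeff"
    unfolding projP_def orth_proj_def prj_def chain_inner_def ipS_def bdT_eq chains_def
    by simp
  have up: "(\<forall>F\<in>smooth_maps X (int d + 1). \<forall>G\<in>smooth_maps X (int d + 1).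
            (F, G) \<in> rel_up X (int d + 1) \<longrightarrow> up_sandwich X (int d) F = up_sandwich X (int d) G)
       \<and> bij_betw (\<lambda>K. the_elem (up_sandwich X (int d) ` K))
           (smooth_maps X (int d + 1) // rel_up X (int d + 1))
           (up_sandwich X (int d) ` smooth_maps X (int d + 1))"
  proof (rule abstract_main[OF fin fin])
    show "up_sandwich X (int d) F = restr (chainsp ?T) (mapM ?S ?T bd_coeff \<circ> F \<circ> mapL ?S ?T bd_coeff)" for F
      unfolding up_sandwich_def bdT_eq bd_eq chains_def ..
    show "rel_up X (int d + 1) = {(A,B). A \<in> smooth_maps X (int d + 1) \<and> B \<in> smooth_maps X (int d + 1) \<and>
         restr (chainsp ?S) (prj ?S ?T bd_coeff \<circ> A \<circ> prj ?S ?T bd_coeff)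
       = restr (chainsp ?S) (prj ?S ?T bd_coeff \<circ> B \<circ> prj ?S ?T bd_coeff)}"
      unfolding rel_up_def P_eq chains_def ..
  qed
  let ?S' = "simplices X (int d - 1)"
  have bd_eq': "bd X (int d) = mapL ?S' ?T (\<lambda>\<tau> \<sigma>. bd_coeff \<sigma> \<tau>)"
    by (simp add: fun_eq_iff bd_def mapL_def)
  have bdT_eq': "bdT X (int d) = mapM ?S' ?T (\<lambda>\<tau> \<sigma>. bd_coeff \<sigma> \<tau>)"
    by (simp add: fun_eq_iff bdT_def mapM_def)
  have Q_eq: "projQ X (int d - 1) = prj ?S' ?T (\<lambda>\<tau> \<sigma>. bd_coeff \<sigma> \<tau>)"
    unfolding projQ_def orth_proj_def prj_def chain_inner_def ipS_def chains_def
    by (simp add: bd_eq')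
  have down: "(\<forall>H\<in>smooth_maps X (int d - 1). \<forall>H'\<in>smooth_maps X (int d - 1).
            (H, H') \<in> rel_down X (int d - 1) \<longrightarrow> down_sandwich X (int d) H = down_sandwich X (int d) H')
       \<and> bij_betw (\<lambda>K. the_elem (down_sandwich X (int d) ` K))
           (smooth_maps X (int d - 1) // rel_down X (int d - 1))
           (down_sandwich X (int d) ` smooth_maps X (int d - 1))"
  proof (rule abstract_main[OF fin fin])
    show "down_sandwich X (int d) F = restr (chainsp ?T) (mapM ?S' ?T (\<lambda>\<tau> \<sigma>. bd_coeff \<sigma> \<tau>) \<circ> F \<circ> mapL ?S' ?T (\<lambda>\<tau> \<sigma>. bd_coeff \<sigma> \<tau>))" for F
      unfolding down_sandwich_def bdT_eq' bd_eq' chains_def ..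
    show "rel_down X (int d - 1) = {(A,B). A \<in> smooth_maps X (int d - 1) \<and> B \<in> smooth_maps X (int d - 1) \<and>
         restr (chainsp ?S') (prj ?S' ?T (\<lambda>\<tau> \<sigma>. bd_coeff \<sigma> \<tau>) \<circ> A \<circ> prj ?S' ?T (\<lambda>\<tau> \<sigma>. bd_coeff \<sigma> \<tau>))
       = restr (chainsp ?S') (prj ?S' ?T (\<lambda>\<tau> \<sigma>. bd_coeff \<sigma> \<tau>) \<circ> B \<circ> prj ?S' ?T (\<lambda>\<tau> \<sigma>. bd_coeff \<sigma> \<tau>))}"
      unfolding rel_down_def Q_eq chains_def ..
  qed
  from up down show ?thesis by blast
qed

end
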